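(* Under the assumptions of the preceding theorem (closed sum property, $\delta>0$ with $\|[g]\|_q\le\frac1\delta\|Sg\|_{L^2(\mu)}$ for all $g\in\overline H$, $\psi$ $(\sigma_R)_{R>0}$-strongly convex on bounded sets, and $\mathcal M\subset H$ uniformly bounded in summation around $c$ with radius $R$), for all $\tilde h,h\in\mathcal M$, $$F(\tilde h)-F(h)\ \ge\ -\frac{1}{2\delta^2\sigma_R}\,\|d\hat F([h],\cdot)\|_q^2 .$$
   Context: Let $(\mathcal X,\mu)$ be a finite measure space, $N\ge1$, $c\in L^\infty(\mu)$, $\psi:\mathbb R\to\mathbb R$ continuously differentiable. $\psi$ is $(\sigma_R)_{R>0}$-strongly convex on bounded sets if for each $R>0$, $\sigma_R>0$ and $\psi(\tilde s)\ge\psi(s)+\psi'(s)(\tilde s-s)+\frac{\sigma_R}{2}(\tilde s-s)^2$ for all $s,\tilde s\in(-R,R)$. Let $H_1,\dots,H_N$ be linear subspaces of $L^\infty(\mu)$, $H=H_1\times\dots\times H_N$, $Sh=\sum_i h_i$. $\mathcal M\subset H$ is uniformly bounded in summation around $c$ with radius $R$ if $\|Sh-c\|_{L^\infty(\mu)}<R$ for all $h\in\mathcal M$. $F(h)=\int(\psi(Sh-c)-Sh)\,d\mu$, $dF(h,r)=\int(\psi'(Sh-c)-1)Sr\,d\mu$. Let $\overline H_i$ be the $L^2(\mu)$-closure of $H_i$; closed sum property: $\{\sum_i g_i:g_i\in\overline H_i\}$ is closed in $L^2(\mu)$. $\overline H=\prod_i\overline H_i$ with $\|h\|_{\mathrm{sum}}=(\sum_i\|h_i\|^2_{L^2(\mu)})^{1/2}$,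 $\ker S=\{h\in\overline H:Sh=0\}$, $[h]=h+\ker S$, $\|[h]\|_q=\inf_{\tilde h\in[h]}\|\tilde h\|_{\mathrm{sum}}$, $\hat H_\infty=\{[h]:h\in H\}$, $d\hat F([h],[r])=dF(h,r)$, and $\|d\hat F([h],\cdot)\|_q=\sup\{|dF(h,r)|:r\in H,\|[r]\|_q\le1\}$. *)

theory Defs
  imports "HOL-Probability.Probability"
begin

text \<open>Functions on the measure space are real-valued functions; elements of
  L^p are represented by (measurable) functions, a.e. equality being handled
  implicitly through the seminorms / AE statements.\<close>

definition Linf :: "'a measure \<Rightarrow> ('a \<Rightarrow> real) set" where
  "Linf M = {f \<in> borel_measurable M. \<exists>C. AE x in M. \<bar>f x\<bar> \<le> C}"

definition Linf_norm :: "'a measure \<Rightarrow> ('a \<Rightarrow> real) \<Rightarrow> ereal" where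
  "Linf_norm M f = esssup M (\<lambda>x. ereal \<bar>f x\<bar>)"

definition L2 :: "'a measure \<Rightarrow> ('a \<Rightarrow> real) set" where
  "L2 M = {f \<in> borel_measurable M. integrable M (\<lambda>x. (f x)\<^sup>2)}"

definition L2_norm :: "'a measure \<Rightarrow> ('a \<Rightarrow> real) \<Rightarrow> real" where
  "L2_norm M f = sqrt (\<integral>x. (f x)\<^sup>2 \<partial>M)"

definition lin_subspace :: "('a \<Rightarrow> real) set \<Rightarrow> bool" where
  "lin_subspace V \<longleftrightarrow> (\<lambda>x. 0) \<in> V \<and>
     (\<forall>f\<in>V. \<forall>g\<in>V. (\<lambda>x. f x + g x) \<in> V) \<and>
     (\<forall>a::real. \<forall>f\<in>V. (\<lambda>x. a * f x) \<in> V)"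

definition L2_closure :: "'a measure \<Rightarrow> ('a \<Rightarrow> real) set \<Rightarrow> ('a \<Rightarrow> real) set" where
  "L2_closure M A = {g \<in> L2 M. \<forall>e>0. \<exists>a\<in>A. L2_norm M (\<lambda>x. g x - a x) < e}"

text \<open>Tuples h = (h_0,...,h_{N-1}) are functions nat => ('a => real); only i < N matter.\<close>
definition Ssum :: "nat \<Rightarrow> (nat \<Rightarrow> 'a \<Rightarrow> real) \<Rightarrow> 'a \<Rightarrow> real" where
  "Ssum N h = (\<lambda>x. \<Sum>i<N. h i x)"

definition in_prod :: "nat \<Rightarrow> (nat \<Rightarrow> ('a \<Rightarrow> real) set) \<Rightarrow> (nat \<Rightarrow> 'a \<Rightarrow> real) \<Rightarrow> bool" where
  "in_prod N V h \<longleftrightarrow> (\<forall>i<N. h i \<in> V i)"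

definition Hbar :: "'a measure \<Rightarrow> (nat \<Rightarrow> ('a \<Rightarrow> real) set) \<Rightarrow> nat \<Rightarrow> ('a \<Rightarrow> real) set" where
  "Hbar M H i = L2_closure M (H i)"

definition closed_sum_property :: "'a measure \<Rightarrow> nat \<Rightarrow> (nat \<Rightarrow> ('a \<Rightarrow> real) set) \<Rightarrow> bool" where
  "closed_sum_property M N H \<longleftrightarrow>
     (let A = {Ssum N g | g. in_prod N (Hbar M H) g} in L2_closure M A \<subseteq> A)"

definition sum_norm :: "'a measure \<Rightarrow> nat \<Rightarrow> (nat \<Rightarrow> 'a \<Rightarrow> real) \<Rightarrow> real" where
  "sum_norm M N h = sqrt (\<Sum>i<N. (L2_norm M (h i))\<^sup>2)"

text \<open>Quotient norm of [h] = h + ker S, with ker S = {g in Hbar. S g = 0 in L^2}.\<close>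
definition q_norm :: "'a measure \<Rightarrow> nat \<Rightarrow> (nat \<Rightarrow> ('a \<Rightarrow> real) set) \<Rightarrow> (nat \<Rightarrow> 'a \<Rightarrow> real) \<Rightarrow> real" where
  "q_norm M N H h = Inf {sum_norm M N g | g. in_prod N (Hbar M H) g \<and>
                          (AE x in M. Ssum N g x = Ssum N h x)}"

definition Fobj :: "'a measure \<Rightarrow> nat \<Rightarrow> (real \<Rightarrow> real) \<Rightarrow> ('a \<Rightarrow> real) \<Rightarrow> (nat \<Rightarrow> 'a \<Rightarrow> real) \<Rightarrow> real" where
  "Fobj M N \<psi> c h = (\<integral>x. \<psi> (Ssum N h x - c x) - Ssum N h x \<partial>M)"

definition dF :: "'a measure \<Rightarrow> nat \<Rightarrow> (real \<Rightarrow> real) \<Rightarrow> ('a \<Rightarrow> real) \<Rightarrow> (nat \<Rightarrow> 'a \<Rightarrow> real) \<Rightarrow> (nat \<Rightarrow> 'a \<Rightarrow> real) \<Rightarrow> real" where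
  "dF M N \<psi>' c h r = (\<integral>x. (\<psi>' (Ssum N h x - c x) - 1) * Ssum N r x \<partial>M)"

definition dF_q_norm :: "'a measure \<Rightarrow> nat \<Rightarrow> (nat \<Rightarrow> ('a \<Rightarrow> real) set) \<Rightarrow> (real \<Rightarrow> real) \<Rightarrow> ('a \<Rightarrow> real) \<Rightarrow> (nat \<Rightarrow> 'a \<Rightarrow> real) \<Rightarrow> real" where
  "dF_q_norm M N H \<psi>' c h = Sup {\<bar>dF M N \<psi>' c h r\<bar> | r. in_prod N H r \<and> q_norm M N H r \<le> 1}"

definition strongly_convex_bdd :: "(real \<Rightarrow> real) \<Rightarrow> (real \<Rightarrow> real) \<Rightarrow> (real \<Rightarrow> real) \<Rightarrow> bool" where
  "strongly_convex_bdd \<psi> \<psi>' \<sigma> \<longleftrightarrow> (\<forall>R>0. \<sigma> R > 0 \<and>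
     (\<forall>s t. \<bar>s\<bar> < R \<longrightarrow> \<bar>t\<bar> < R \<longrightarrow>
        \<psi> t \<ge> \<psi> s + \<psi>' s * (t - s) + \<sigma> R / 2 * (t - s)\<^sup>2))"

definition unif_bdd_sum :: "'a measure \<Rightarrow> nat \<Rightarrow> ('a \<Rightarrow> real) \<Rightarrow> real \<Rightarrow> (nat \<Rightarrow> 'a \<Rightarrow> real) set \<Rightarrow> bool" where
  "unif_bdd_sum M N c R Ms \<longleftrightarrow>
     (\<forall>h\<in>Ms. Linf_norm M (\<lambda>x. Ssum N h x - c x) < ereal R)"

end

theory Submission
  imports Defs
begin

lemma Linf_iff: "f \<in> Linf M \<longleftrightarrow> f \<in> borel_measurable M \<and> (\<exists>C\<ge>0. AE x in M. \<bar>f x\<bar> \<le> C)"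
proof
  assume "f \<in> Linf M"
  then obtain C where m: "f \<in> borel_measurable M" and C: "AE x in M. \<bar>f x\<bar> \<le> C"
    unfolding Linf_def by auto
  have "AE x in M. \<bar>f x\<bar> \<le> max C 0" using C by eventually_elim auto
  then show "f \<in> borel_measurable M \<and> (\<exists>C\<ge>0. AE x in M. \<bar>f x\<bar> \<le> C)" using m
    by (intro conjI exI[of _ "max C 0"]) auto
qed (auto simp: Linf_def)

lemma Linf_const: "(\<lambda>x. a) \<in> Linf M"
  unfolding Linf_def by auto

lemma Linf_add: assumes "f \<in> Linf M" "g \<in> Linf M" shows "(\<lambda>x. f x + g x) \<in> Linf M"
proof -
  obtain C D where "f \<in> borel_measurable M" "g \<in> borel_measurable M"
    "AE x in M. \<bar>f x\<bar> \<le> C" "AE x in M. \<bar>g x\<bar> \<le> D" using assms unfolding Linf_def by auto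
  moreover have "AE x in M. \<bar>f x + g x\<bar> \<le> C + D" using calculation(3,4) by eventually_elim auto
  ultimately show ?thesis unfolding Linf_def by auto
qed

lemma Linf_mult: assumes "f \<in> Linf M" "g \<in> Linf M" shows "(\<lambda>x. f x * g x) \<in> Linf M"
proof -
  obtain C D where "f \<in> borel_measurable M" "g \<in> borel_measurable M" "C \<ge> 0" "D \<ge> 0"
    "AE x in M. \<bar>f x\<bar> \<le> C" "AE x in M. \<bar>g x\<bar> \<le> D" using assms unfolding Linf_iff by auto
  moreover have "AE x in M. \<bar>f x * g x\<bar> \<le> C * D" using calculation(5,6)
  proof eventually_elim
    case (elim x) then show ?case by (simp add: abs_mult mult_mono)
  qed
  ultimately show ?thesis unfolding Linf_def by auto
qed

lemma Linf_diff: assumes "f \<in> Linf M" "g \<in> Linf M" shows "(\<lambda>x. f x - g x) \<in> Linf M"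
proof -
  have "(\<lambda>x. f x + (-1) * g x) \<in> Linf M" by (intro Linf_add Linf_mult Linf_const assms)
  then show ?thesis by simp
qed

lemma Linf_Ssum: "(\<And>i. i < n \<Longrightarrow> h i \<in> Linf M) \<Longrightarrow> Ssum n h \<in> Linf M"
proof (induction n)
  case 0 then show ?case by (simp add: Ssum_def Linf_const)
next
  case (Suc n)
  have "(\<lambda>x. Ssum n h x + h n x) \<in> Linf M"
    using Suc by (intro Linf_add) auto
  then show ?case by (simp add: Ssum_def)
qed

lemma Linf_cont: assumes "f \<in> Linf M" "continuous_on UNIV \<phi>" shows "(\<lambda>x. \<phi> (f x)) \<in> Linf M"
proof -
  obtain C where m: "f \<in> borel_measurable M" and C: "AE x in M. \<bar>f x\<bar> \<le> C"
    using assms unfolding Linf_def by auto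
  have "compact (\<phi> ` {-C..C})"
    by (intro compact_continuous_image continuous_on_subset[OF assms(2)]) auto
  then obtain B where B: "\<forall>y\<in>\<phi> ` {-C..C}. \<bar>y\<bar> \<le> B" using compact_imp_bounded bounded_real by metis
  have "AE x in M. \<bar>\<phi> (f x)\<bar> \<le> B" using C
  proof eventually_elim
    case (elim x) then have "f x \<in> {-C..C}" by auto
    then show ?case using B by auto
  qed
  moreover have "(\<lambda>x. \<phi> (f x)) \<in> borel_measurable M"
    by (rule borel_measurable_continuous_on[OF assms(2) m])
  ultimately show ?thesis unfolding Linf_def by auto
qed

lemma Linf_integrable: assumes "finite_measure M" "f \<in> Linf M" shows "integrable M f"
proof -
  obtain C where m: "f \<in> borel_measurable M" and C: "AE x in M. \<bar>f x\<bar> \<le> C"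
    using assms unfolding Linf_def by auto
  show ?thesis by (rule finite_measure.integrable_const_bound[OF assms(1) _ m, of C]) (use C in auto)
qed

lemma Linf_L2: assumes "finite_measure M" "f \<in> Linf M" shows "f \<in> L2 M"
proof -
  have "(\<lambda>x. (f x)\<^sup>2) \<in> Linf M" using Linf_mult[OF assms(2) assms(2)] by (simp add: power2_eq_square)
  then show ?thesis using assms Linf_integrable unfolding L2_def Linf_def by blast
qed

lemma L2_norm_scale: "L2_norm M (\<lambda>x. t * f x) = \<bar>t\<bar> * L2_norm M f"
proof -
  have "(\<integral>x. (t * f x)\<^sup>2 \<partial>M) = t\<^sup>2 * (\<integral>x. (f x)\<^sup>2 \<partial>M)"
    by (simp add: power_mult_distrib)
  then show ?thesis unfolding L2_norm_def by (simp add: real_sqrt_mult)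
qed

lemma lin_sub_scale: "lin_subspace V \<Longrightarrow> f \<in> V \<Longrightarrow> (\<lambda>x. a * f x) \<in> V"
  unfolding lin_subspace_def by blast

lemma lin_sub_diff: assumes "lin_subspace V" "f \<in> V" "g \<in> V" shows "(\<lambda>x. f x - g x) \<in> V"
proof -
  have *: "(\<lambda>x. (-1) * g x) \<in> V" using lin_sub_scale assms by blast
  have "\<forall>f\<in>V. \<forall>g\<in>V. (\<lambda>x. f x + g x) \<in> V" using assms(1) unfolding lin_subspace_def by blast
  from this[rule_format, OF assms(2) *] have "(\<lambda>x. f x + (-1) * g x) \<in> V" .
  then show ?thesis by simp
qed

lemma H_Hbar: assumes "finite_measure M" "f \<in> Linf M" shows "f \<in> L2_closure M A \<or> f \<notin> A"
proof -
  have "L2_norm M (\<lambda>x. f x - f x) = 0" by (simp add: L2_norm_def)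
  then show ?thesis using Linf_L2[OF assms] unfolding L2_closure_def by force
qed

lemma Hbar_scale:
  assumes "lin_subspace V" "g \<in> L2_closure M V" "t \<noteq> 0"
  shows "(\<lambda>x. t * g x) \<in> L2_closure M V"
proof -
  have g: "g \<in> borel_measurable M" "integrable M (\<lambda>x. (g x)\<^sup>2)" using assms(2)
    unfolding L2_closure_def L2_def by auto
  have "integrable M (\<lambda>x. t\<^sup>2 * (g x)\<^sup>2)" using g by simp
  then have "(\<lambda>x. t * g x) \<in> L2 M" using g unfolding L2_def by (simp add: power_mult_distrib)
  moreover have "\<exists>a\<in>V. L2_norm M (\<lambda>x. t * g x - a x) < e" if e: "e > 0" for e
  proof -
    have "e / \<bar>t\<bar> > 0" using e assms(3) by simp
    then obtain a where a: "a \<in> V" "L2_norm M (\<lambda>x. g x - a x) < e / \<bar>t\<bar>"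
      using assms(2) unfolding L2_closure_def by blast
    have "L2_norm M (\<lambda>x. t * g x - t * a x) = \<bar>t\<bar> * L2_norm M (\<lambda>x. g x - a x)"
      using L2_norm_scale[of M t "\<lambda>x. g x - a x"] by (simp add: algebra_simps)
    also have "\<dots> < e" using a(2) assms(3) by (simp add: field_simps)
    finally show ?thesis using lin_sub_scale[OF assms(1) a(1), of t] by (intro bexI[of _ "\<lambda>x. t * a x"])
  qed
  ultimately show ?thesis unfolding L2_closure_def by blast
qed

lemma sum_norm_scale: "sum_norm M N (\<lambda>i x. t * k i x) = \<bar>t\<bar> * sum_norm M N k"
proof -
  have "(\<Sum>i<N. (L2_norm M (\<lambda>x. t * k i x))\<^sup>2) = t\<^sup>2 * (\<Sum>i<N. (L2_norm M (k i))\<^sup>2)"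
    by (simp add: L2_norm_scale power_mult_distrib sum_distrib_left)
  then show ?thesis unfolding sum_norm_def by (simp add: real_sqrt_mult)
qed

lemma sum_norm_nonneg: "sum_norm M N k \<ge> 0"
  unfolding sum_norm_def by (simp add: sum_nonneg)

lemma Ssum_scale: "Ssum N (\<lambda>i x. t * k i x) = (\<lambda>x. t * Ssum N k x)"
  unfolding Ssum_def by (simp add: sum_distrib_left)


lemma H_Hbar': assumes "finite_measure M" "f \<in> Linf M" "f \<in> A" shows "f \<in> L2_closure M A"
proof -
  have "L2_norm M (\<lambda>x. f x - f x) = 0" by (simp add: L2_norm_def)
  then show ?thesis using Linf_L2[OF assms(1,2)] assms(3) unfolding L2_closure_def by force
qed

lemma inprod_Hbar:
  assumes "finite_measure M" "\<And>i. i < N \<Longrightarrow> H i \<subseteq> Linf M" "in_prod N H g"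
  shows "in_prod N (Hbar M H) g"
  using assms H_Hbar' unfolding in_prod_def Hbar_def by blast

lemma q_basic:
  assumes "finite_measure M" "\<And>i. i < N \<Longrightarrow> H i \<subseteq> Linf M" "in_prod N H g"
  shows "{sum_norm M N k | k. in_prod N (Hbar M H) k \<and> (AE x in M. Ssum N k x = Ssum N g x)} \<noteq> {}"
    and "bdd_below {sum_norm M N k | k. in_prod N (Hbar M H) k \<and> (AE x in M. Ssum N k x = Ssum N g x)}"
    and "q_norm M N H g \<ge> 0"
proof -
  show ne: "{sum_norm M N k | k. in_prod N (Hbar M H) k \<and> (AE x in M. Ssum N k x = Ssum N g x)} \<noteq> {}"
    using inprod_Hbar[OF assms] by auto
  show "bdd_below {sum_norm M N k | k. in_prod N (Hbar M H) k \<and> (AE x in M. Ssum N k x = Ssum N g x)}"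
    using sum_norm_nonneg by (intro bdd_belowI[of _ 0]) auto
  show "q_norm M N H g \<ge> 0" unfolding q_norm_def
    using ne sum_norm_nonneg by (intro cInf_greatest) auto
qed

lemma q_scale:
  assumes fm: "finite_measure M" and HL: "\<And>i. i < N \<Longrightarrow> lin_subspace (H i) \<and> H i \<subseteq> Linf M"
    and g: "in_prod N H g" and t: "t > 0"
  shows "q_norm M N H (\<lambda>i x. t * g i x) \<le> t * q_norm M N H g"
proof -
  have HL': "\<And>i. i < N \<Longrightarrow> H i \<subseteq> Linf M" using HL by auto
  have tg: "in_prod N H (\<lambda>i x. t * g i x)" using g HL lin_sub_scale unfolding in_prod_def by blast
  note qb = q_basic[OF fm HL' tg]
  note qg = q_basic[OF fm HL' g]
  have "q_norm M N H (\<lambda>i x. t * g i x) / t \<le> s"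
    if s_in: "s \<in> {sum_norm M N k | k. in_prod N (Hbar M H) k \<and> (AE x in M. Ssum N k x = Ssum N g x)}" for s
  proof -
    obtain k where k: "s = sum_norm M N k" "in_prod N (Hbar M H) k" "AE x in M. Ssum N k x = Ssum N g x"
      using s_in by blast
    have "in_prod N (Hbar M H) (\<lambda>i x. t * k i x)"
      using k(2) HL Hbar_scale t unfolding in_prod_def Hbar_def by (metis less_irrefl)
    moreover have "AE x in M. Ssum N (\<lambda>i x. t * k i x) x = Ssum N (\<lambda>i x. t * g i x) x"
      using k(3) by eventually_elim (simp add: Ssum_scale)
    ultimately have "sum_norm M N (\<lambda>i x. t * k i x) \<in>
      {sum_norm M N k | k. in_prod N (Hbar M H) k \<and> (AE x in M. Ssum N k x = Ssum N (\<lambda>i x. t * g i x) x)}"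
      by blast
    then have "q_norm M N H (\<lambda>i x. t * g i x) \<le> sum_norm M N (\<lambda>i x. t * k i x)"
      unfolding q_norm_def using qb(2) by (rule cInf_lower)
    also have "\<dots> = t * s" using k(1) t by (simp add: sum_norm_scale)
    finally show ?thesis using t by (simp add: field_simps)
  qed
  then have "q_norm M N H (\<lambda>i x. t * g i x) / t \<le> q_norm M N H g"
    unfolding q_norm_def[of M N H g] using qg(1) by (intro cInf_greatest) auto
  then show ?thesis using t by (simp add: field_simps)
qed

lemma dF_scale: "dF M N \<psi>' c h (\<lambda>i x. t * g i x) = t * dF M N \<psi>' c h g"
proof -
  have "(\<lambda>x. (\<psi>' (Ssum N h x - c x) - 1) * (t * Ssum N g x)) = (\<lambda>x. t * ((\<psi>' (Ssum N h x - c x) - 1) * Ssum N g x))"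
    by (auto simp: fun_eq_iff)
  then show ?thesis unfolding dF_def Ssum_scale by simp
qed


lemma abs_le_half_sq: "\<bar>a::real\<bar> \<le> (1 + a\<^sup>2) / 2"
proof -
  have "0 \<le> (\<bar>a\<bar> - 1)\<^sup>2" by simp
  then show ?thesis by (simp add: power2_eq_square algebra_simps abs_mult_self_eq)
qed

lemma dF_bdd:
  assumes fm: "finite_measure M" and HL: "\<And>i. i < N \<Longrightarrow> H i \<subseteq> Linf M"
    and sR: "AE x in M. \<bar>Ssum N h x - c x\<bar> < R" and sL: "(\<lambda>x. Ssum N h x - c x) \<in> Linf M"
    and cont: "continuous_on UNIV \<psi>'"
  shows "\<exists>B. \<forall>r. in_prod N H r \<and> q_norm M N H r \<le> 1 \<longrightarrow> \<bar>dF M N \<psi>' c h r\<bar> \<le> B"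
proof -
  have "compact (\<psi>' ` {-R..R})"
    by (intro compact_continuous_image continuous_on_subset[OF cont]) auto
  then obtain K0 where K0: "\<forall>y\<in>\<psi>' ` {-R..R}. \<bar>y\<bar> \<le> K0" using compact_imp_bounded bounded_real by metis
  define K where "K = max K0 0"
  have K: "\<forall>y\<in>\<psi>' ` {-R..R}. \<bar>y\<bar> \<le> K" "K \<ge> 0" using K0 unfolding K_def by force+
  define \<mu> where "\<mu> = measure M (space M)"
  have \<mu>: "\<mu> \<ge> 0" unfolding \<mu>_def by simp
  define \<phi> where "\<phi> = (\<lambda>x. \<psi>' (Ssum N h x - c x) - 1)"
  have \<phi>L: "\<phi> \<in> Linf M" unfolding \<phi>_def by (intro Linf_diff Linf_cont[OF sL cont] Linf_const)
  have \<phi>b: "AE x in M. \<bar>\<phi> x\<bar> \<le> K + 1" using sR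
  proof eventually_elim
    case (elim x)
    then have "Ssum N h x - c x \<in> {-R..R}" by auto
    then have "\<bar>\<psi>' (Ssum N h x - c x)\<bar> \<le> K" using K(1) by blast
    then show ?case unfolding \<phi>_def by simp
  qed
  show ?thesis
  proof (intro exI[of _ "(K + 1) * (real N * \<mu> + 4) / 2"] allI impI)
    fix r assume r: "in_prod N H r \<and> q_norm M N H r \<le> 1"
    note qb = q_basic[OF fm HL conjunct1[OF r]]
    have "q_norm M N H r < 2" using r by simp
    then obtain k where k: "in_prod N (Hbar M H) k" "AE x in M. Ssum N k x = Ssum N r x" "sum_norm M N k < 2"
      using cInf_less_iff[OF qb(1,2)] unfolding q_norm_def by blast
    have kL2: "k i \<in> borel_measurable M" "integrable M (\<lambda>x. (k i x)\<^sup>2)" if "i < N" for i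
      using k(1) that unfolding in_prod_def Hbar_def L2_closure_def L2_def by auto
    have rL: "Ssum N r \<in> Linf M" using r HL unfolding in_prod_def by (intro Linf_Ssum) auto
    have Skm: "Ssum N k \<in> borel_measurable M" unfolding Ssum_def
      by (rule borel_measurable_sum) (use kL2 in auto)
    have rm: "Ssum N r \<in> borel_measurable M" using rL unfolding Linf_def by auto
    have intr: "integrable M (Ssum N r)" using Linf_integrable[OF fm rL] .
    have intpr: "integrable M (\<lambda>x. \<phi> x * Ssum N r x)" using Linf_integrable[OF fm Linf_mult[OF \<phi>L rL]] .
    define G where "G = (\<lambda>x. \<Sum>i<N. (1 + (k i x)\<^sup>2) / 2)"
    have intG1: "integrable M (\<lambda>x. (1 + (k i x)\<^sup>2) / 2)" if "i < N" for i
      using kL2[OF that] finite_measure.integrable_const[OF fm]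
      by (intro integrable_divide_zero Bochner_Integration.integrable_add) auto
    have intG: "integrable M G" unfolding G_def using intG1 by auto
    have Gb: "\<bar>Ssum N k x\<bar> \<le> G x" for x
    proof -
      have "\<bar>Ssum N k x\<bar> \<le> (\<Sum>i<N. \<bar>k i x\<bar>)" unfolding Ssum_def by (rule sum_abs)
      also have "\<dots> \<le> G x" unfolding G_def by (rule sum_mono) (rule abs_le_half_sq)
      finally show ?thesis .
    qed
    have intk: "integrable M (\<lambda>x. \<bar>Ssum N k x\<bar>)"
      by (rule Bochner_Integration.integrable_bound[OF intG]) (use Skm Gb in \<open>auto intro: order_trans[OF _ abs_ge_self]\<close>)
    have "\<bar>dF M N \<psi>' c h r\<bar> = \<bar>\<integral>x. \<phi> x * Ssum N r x \<partial>M\<bar>" unfolding dF_def \<phi>_def by simp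
    also have "\<dots> \<le> (\<integral>x. \<bar>\<phi> x * Ssum N r x\<bar> \<partial>M)" using integral_norm_bound[of M "\<lambda>x. \<phi> x * Ssum N r x"] by simp
    also have "\<dots> \<le> (\<integral>x. (K + 1) * \<bar>Ssum N r x\<bar> \<partial>M)"
    proof (rule integral_mono_AE)
      show "integrable M (\<lambda>x. \<bar>\<phi> x * Ssum N r x\<bar>)" using intpr by auto
      show "integrable M (\<lambda>x. (K + 1) * \<bar>Ssum N r x\<bar>)" using intr by auto
      show "AE x in M. \<bar>\<phi> x * Ssum N r x\<bar> \<le> (K + 1) * \<bar>Ssum N r x\<bar>" using \<phi>b
        by eventually_elim (simp add: abs_mult mult_right_mono)
    qed
    also have "\<dots> = (K + 1) * (\<integral>x. \<bar>Ssum N k x\<bar> \<partial>M)"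
    proof -
      have "(\<integral>x. \<bar>Ssum N r x\<bar> \<partial>M) = (\<integral>x. \<bar>Ssum N k x\<bar> \<partial>M)"
        by (rule integral_cong_AE) (use rm Skm k(2) in auto)
      then show ?thesis by simp
    qed
    also have "\<dots> \<le> (K + 1) * (\<integral>x. G x \<partial>M)"
      using K(2) by (intro mult_left_mono integral_mono[OF intk intG]) (use Gb in auto)
    also have "(\<integral>x. G x \<partial>M) = (\<Sum>i<N. (\<mu> + (\<integral>x. (k i x)\<^sup>2 \<partial>M)) / 2)"
    proof -
      have "(\<integral>x. G x \<partial>M) = (\<Sum>i<N. (\<integral>x. (1 + (k i x)\<^sup>2) / 2 \<partial>M))"
        unfolding G_def by (rule Bochner_Integration.integral_sum) (use intG1 in auto)
      also have "\<dots> = (\<Sum>i<N. (\<mu> + (\<integral>x. (k i x)\<^sup>2 \<partial>M)) / 2)"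
      proof (rule sum.cong[OF refl])
        fix i assume "i \<in> {..<N}"
        then have "i < N" by simp
        have "(\<integral>x. (1 + (k i x)\<^sup>2) / 2 \<partial>M) = (\<integral>x. 1 + (k i x)\<^sup>2 \<partial>M) / 2" by simp
        also have "(\<integral>x. 1 + (k i x)\<^sup>2 \<partial>M) = \<mu> + (\<integral>x. (k i x)\<^sup>2 \<partial>M)"
          using kL2[OF \<open>i < N\<close>] finite_measure.integrable_const[OF fm] unfolding \<mu>_def
          by (subst Bochner_Integration.integral_add) auto
        finally show "(\<integral>x. (1 + (k i x)\<^sup>2) / 2 \<partial>M) = (\<mu> + (\<integral>x. (k i x)\<^sup>2 \<partial>M)) / 2" .
      qed
      finally show ?thesis .
    qed
    also have "(\<Sum>i<N. (\<mu> + (\<integral>x. (k i x)\<^sup>2 \<partial>M)) / 2) = (real N * \<mu> + (sum_norm M N k)\<^sup>2) / 2"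
    proof -
      have "(sum_norm M N k)\<^sup>2 = (\<Sum>i<N. (L2_norm M (k i))\<^sup>2)"
        unfolding sum_norm_def by (simp add: sum_nonneg)
      also have "\<dots> = (\<Sum>i<N. (\<integral>x. (k i x)\<^sup>2 \<partial>M))"
        unfolding L2_norm_def by (simp add: integral_nonneg_AE)
      finally show ?thesis by (simp add: sum.distrib sum_divide_distrib[symmetric])
    qed
    also have "(K + 1) * ((real N * \<mu> + (sum_norm M N k)\<^sup>2) / 2) \<le> (K + 1) * (real N * \<mu> + 4) / 2"
    proof -
      have "(sum_norm M N k)\<^sup>2 \<le> 2\<^sup>2" using k(3) sum_norm_nonneg[of M N k]
        by (intro power_mono) auto
      then have "(real N * \<mu> + (sum_norm M N k)\<^sup>2) / 2 \<le> (real N * \<mu> + 4) / 2" by simp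
      from mult_left_mono[OF this, of "K+1"] K(2) show ?thesis by simp
    qed
    finally show "\<bar>dF M N \<psi>' c h r\<bar> \<le> (K + 1) * (real N * \<mu> + 4) / 2" by simp
  qed
qed


theorem mainTheorem6:
  fixes M :: "'a measure" and N :: nat and c :: "'a \<Rightarrow> real"
    and \<psi> \<psi>' :: "real \<Rightarrow> real" and \<sigma> :: "real \<Rightarrow> real"
    and H :: "nat \<Rightarrow> ('a \<Rightarrow> real) set"
    and Ms :: "(nat \<Rightarrow> 'a \<Rightarrow> real) set" and \<delta> R :: real
  assumes "finite_measure M"
    and "N \<ge> 1"
    and "c \<in> Linf M"
    and "\<And>s. (\<psi> has_real_derivative \<psi>' s) (at s)"
    and "continuous_on UNIV \<psi>'"
    and "\<And>i. i < N \<Longrightarrow> lin_subspace (H i) \<and> H i \<subseteq> Linf M"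
    and "closed_sum_property M N H"
    and "\<delta> > 0"
    and "\<And>g. in_prod N (Hbar M H) g \<Longrightarrow> q_norm M N H g \<le> 1 / \<delta> * L2_norm M (Ssum N g)"
    and "strongly_convex_bdd \<psi> \<psi>' \<sigma>"
    and "R > 0"
    and "\<And>h. h \<in> Ms \<Longrightarrow> in_prod N H h"
    and "unif_bdd_sum M N c R Ms"
  shows "\<forall>h' \<in> Ms. \<forall>h \<in> Ms.
           Fobj M N \<psi> c h' - Fobj M N \<psi> c h
             \<ge> - 1 / (2 * \<delta>\<^sup>2 * \<sigma> R) * (dF_q_norm M N H \<psi>' c h)\<^sup>2"
proof (intro ballI)
  fix h' h assume h'M: "h' \<in> Ms" and hM: "h \<in> Ms"
  note fm = assms(1)
  have HL: "\<And>i. i < N \<Longrightarrow> H i \<subseteq> Linf M" using assms(6) by blast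
  have HLs: "\<And>i. i < N \<Longrightarrow> lin_subspace (H i) \<and> H i \<subseteq> Linf M" using assms(6) by blast
  have hH: "in_prod N H h" and h'H: "in_prod N H h'" using assms(12) hM h'M by auto
  have hL: "Ssum N h \<in> Linf M" using hH HL unfolding in_prod_def by (intro Linf_Ssum) auto
  have h'L: "Ssum N h' \<in> Linf M" using h'H HL unfolding in_prod_def by (intro Linf_Ssum) auto
  define s where "s = (\<lambda>x. Ssum N h x - c x)"
  define s' where "s' = (\<lambda>x. Ssum N h' x - c x)"
  have sL: "s \<in> Linf M" unfolding s_def by (rule Linf_diff[OF hL assms(3)])
  have s'L: "s' \<in> Linf M" unfolding s'_def by (rule Linf_diff[OF h'L assms(3)])
  have bndR: "AE x in M. \<bar>f x\<bar> < R" if "Linf_norm M f < ereal R" for f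
  proof -
    have "AE x in M. ereal \<bar>f x\<bar> \<le> Linf_norm M f" unfolding Linf_norm_def by (rule esssup_AE)
    then show ?thesis
    proof eventually_elim
      case (elim x) then have "ereal \<bar>f x\<bar> < ereal R" using that by (rule le_less_trans)
      then show ?case by simp
    qed
  qed
  have sR: "AE x in M. \<bar>s x\<bar> < R" using bndR assms(13) hM unfolding unif_bdd_sum_def s_def by blast
  have s'R: "AE x in M. \<bar>s' x\<bar> < R" using bndR assms(13) h'M unfolding unif_bdd_sum_def s'_def by blast
  define g where "g = (\<lambda>i x. h' i x - h i x)"
  have gH: "in_prod N H g" using hH h'H HLs lin_sub_diff unfolding in_prod_def g_def by blast
  have Sg: "Ssum N g x = Ssum N h' x - Ssum N h x" for x unfolding Ssum_def g_def by (simp add: sum_subtractf)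
  have SgL: "Ssum N g \<in> Linf M" using gH HL unfolding in_prod_def by (intro Linf_Ssum) auto
  have psic: "continuous_on UNIV \<psi>"
    using assms(4) DERIV_isCont continuous_at_imp_continuous_on by blast
  define D where "D = dF_q_norm M N H \<psi>' c h"
  define q where "q = q_norm M N H g"
  define L where "L = L2_norm M (Ssum N g)"
  have conv: "\<sigma> R > 0" "\<And>a b. \<bar>a\<bar> < R \<Longrightarrow> \<bar>b\<bar> < R \<Longrightarrow> \<psi> b \<ge> \<psi> a + \<psi>' a * (b - a) + \<sigma> R / 2 * (b - a)\<^sup>2"
    using assms(10,11) unfolding strongly_convex_bdd_def by auto
  have L2eq: "L\<^sup>2 = (\<integral>x. (Ssum N g x)\<^sup>2 \<partial>M)" unfolding L_def L2_norm_def by (simp add: integral_nonneg_AE)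
  have key1: "Fobj M N \<psi> c h' - Fobj M N \<psi> c h \<ge> dF M N \<psi>' c h g + \<sigma> R / 2 * L\<^sup>2"
  proof -
    define A' where "A' = (\<lambda>x. \<psi> (s' x) - Ssum N h' x)"
    define A where "A = (\<lambda>x. \<psi> (s x) - Ssum N h x)"
    define B where "B = (\<lambda>x. (\<psi>' (s x) - 1) * Ssum N g x + \<sigma> R / 2 * (Ssum N g x)\<^sup>2)"
    have A'i: "integrable M A'" unfolding A'_def
      by (intro Linf_integrable[OF fm] Linf_diff Linf_cont[OF s'L psic] h'L)
    have Ai: "integrable M A" unfolding A_def
      by (intro Linf_integrable[OF fm] Linf_diff Linf_cont[OF sL psic] hL)
    have Bi1: "integrable M (\<lambda>x. (\<psi>' (s x) - 1) * Ssum N g x)"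
      by (intro Linf_integrable[OF fm] Linf_mult Linf_diff Linf_cont[OF sL assms(5)] Linf_const SgL)
    have Bi2: "integrable M (\<lambda>x. (Ssum N g x)\<^sup>2)"
      using Linf_integrable[OF fm Linf_mult[OF SgL SgL]] by (simp add: power2_eq_square)
    have "Fobj M N \<psi> c h' - Fobj M N \<psi> c h = (\<integral>x. A' x - A x \<partial>M)"
      unfolding Fobj_def A'_def A_def s_def s'_def
      by (rule Bochner_Integration.integral_diff[symmetric]) (use A'i Ai in \<open>auto simp: A'_def A_def s_def s'_def\<close>)
    moreover have "(\<integral>x. B x \<partial>M) = dF M N \<psi>' c h g + \<sigma> R / 2 * L\<^sup>2"
      unfolding B_def L2eq dF_def s_def
      by (subst Bochner_Integration.integral_add) (use Bi1 Bi2 in \<open>auto simp: s_def\<close>)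
    moreover have "(\<integral>x. B x \<partial>M) \<le> (\<integral>x. A' x - A x \<partial>M)"
    proof (rule integral_mono_AE)
      show "integrable M B" unfolding B_def using Bi1 Bi2 by auto
      show "integrable M (\<lambda>x. A' x - A x)" using A'i Ai by auto
      show "AE x in M. B x \<le> A' x - A x" using sR s'R
      proof eventually_elim
        case (elim x)
        have d: "s' x - s x = Ssum N g x" unfolding s_def s'_def Sg by simp
        have "\<psi> (s' x) \<ge> \<psi> (s x) + \<psi>' (s x) * (s' x - s x) + \<sigma> R / 2 * (s' x - s x)\<^sup>2"
          using conv(2) elim by blast
        then have i: "\<psi> (s' x) \<ge> \<psi> (s x) + \<psi>' (s x) * Ssum N g x + \<sigma> R / 2 * (Ssum N g x)\<^sup>2"
          unfolding d .
        have e1: "A' x - A x = \<psi> (s' x) - \<psi> (s x) - Ssum N g x" unfolding A'_def A_def Sg by simp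
        have e2: "B x = \<psi>' (s x) * Ssum N g x - Ssum N g x + \<sigma> R / 2 * (Ssum N g x)\<^sup>2"
          unfolding B_def by (simp add: algebra_simps)
        show ?case unfolding e1 e2 using i by linarith
      qed
    qed
    ultimately show ?thesis by simp
  qed
  note qg = q_basic[OF fm HL gH]
  have q0: "q \<ge> 0" unfolding q_def by (rule qg(3))
  have key3: "q \<le> 1 / \<delta> * L" unfolding q_def L_def
    by (rule assms(9)[OF inprod_Hbar[OF fm HL gH]])
  have key2: "\<bar>dF M N \<psi>' c h g\<bar> \<le> D * q"
  proof -
    obtain B where B: "\<forall>r. in_prod N H r \<and> q_norm M N H r \<le> 1 \<longrightarrow> \<bar>dF M N \<psi>' c h r\<bar> \<le> B"
      using dF_bdd[where H=H, OF fm HL sR[unfolded s_def] sL[unfolded s_def] assms(5)] by blast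
    have bdd: "bdd_above {\<bar>dF M N \<psi>' c h r\<bar> | r. in_prod N H r \<and> q_norm M N H r \<le> 1}"
      using B by (intro bdd_aboveI[of _ B]) auto
    have inD: "\<bar>dF M N \<psi>' c h r\<bar> \<le> D" if "in_prod N H r" "q_norm M N H r \<le> 1" for r
      unfolding D_def dF_q_norm_def by (rule cSup_upper[OF _ bdd]) (use that in auto)
    have claim: "\<bar>dF M N \<psi>' c h g\<bar> \<le> D * (q + u)" if u: "u > 0" for u
    proof -
      define t where "t = 1 / (q + u)"
      have t: "t > 0" using q0 u unfolding t_def by simp
      have rH: "in_prod N H (\<lambda>i x. t * g i x)" using gH HLs lin_sub_scale unfolding in_prod_def by blast
      have "q_norm M N H (\<lambda>i x. t * g i x) \<le> t * q" unfolding q_def by (rule q_scale[OF fm HLs gH t])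
      also have "t * q \<le> 1" using q0 u unfolding t_def by (simp add: field_simps)
      finally have "\<bar>dF M N \<psi>' c h (\<lambda>i x. t * g i x)\<bar> \<le> D" using inD rH by blast
      then have "t * \<bar>dF M N \<psi>' c h g\<bar> \<le> D" using t by (simp add: dF_scale abs_mult)
      then show ?thesis using q0 u unfolding t_def by (simp add: field_simps)
    qed
    have D0: "D \<ge> 0"
    proof -
      have "0 \<le> D * (q + 1)" using claim[of 1] by (meson abs_ge_zero order_trans zero_less_one)
      then show ?thesis using q0 by (simp add: zero_le_mult_iff)
    qed
    show ?thesis
    proof (rule field_le_epsilon)
      fix e :: real assume e: "e > 0"
      have "\<bar>dF M N \<psi>' c h g\<bar> \<le> D * (q + e / (D + 1))" using claim[of "e / (D+1)"] e D0 by simp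
      also have "\<dots> = D * q + e * (D / (D + 1))" using D0 by (simp add: field_simps)
      also have "\<dots> \<le> D * q + e * 1" using D0 e by (intro add_left_mono mult_left_mono) auto
      finally show "\<bar>dF M N \<psi>' c h g\<bar> \<le> D * q + e" by simp
    qed
  qed
  define b where "b = \<sigma> R / 2 * \<delta>\<^sup>2"
  have b: "b > 0" unfolding b_def using conv(1) assms(8) by simp
  have L0: "L \<ge> 0" unfolding L_def L2_norm_def by simp
  have "\<delta> * q \<le> L" using key3 assms(8) by (simp add: field_simps)
  then have "(\<delta> * q)\<^sup>2 \<le> L\<^sup>2" using q0 assms(8) by (intro power_mono) auto
  then have "\<sigma> R / 2 * (\<delta> * q)\<^sup>2 \<le> \<sigma> R / 2 * L\<^sup>2" using conv(1) by (intro mult_left_mono) auto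
  then have diff: "Fobj M N \<psi> c h' - Fobj M N \<psi> c h \<ge> - (D * q) + b * q\<^sup>2"
    using key1 key2 unfolding b_def by (simp add: power_mult_distrib algebra_simps)
  have quad: "- (D * q) + b * q\<^sup>2 \<ge> - D\<^sup>2 / (4 * b)"
  proof -
    have "0 \<le> (2 * b * q - D)\<^sup>2" by simp
    then have "0 \<le> 4 * b * (- (D * q) + b * q\<^sup>2) + D\<^sup>2" by (simp add: power2_eq_square algebra_simps)
    then have "- D\<^sup>2 \<le> 4 * b * (- (D * q) + b * q\<^sup>2)" by simp
    moreover have "4 * b > 0" using b by simp
    ultimately show ?thesis by (subst pos_divide_le_eq) (auto simp: mult.commute)
  qed
  have "- 1 / (2 * \<delta>\<^sup>2 * \<sigma> R) * D\<^sup>2 = - D\<^sup>2 / (4 * b)" unfolding b_def by (simp add: field_simps)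
  then show "Fobj M N \<psi> c h' - Fobj M N \<psi> c h \<ge> - 1 / (2 * \<delta>\<^sup>2 * \<sigma> R) * (dF_q_norm M N H \<psi>' c h)\<^sup>2"
    using diff quad unfolding D_def by linarith
qed

end
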